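(* Let $n,m\geq 1$ be integers, $\theta>0$, and $p,q\in\Lambda_{n,m,\theta}$. For $0<\xi<\xi'$ set $$ \langle p,q\rangle^{\prime,(\xi,\xi')}_{n,m,\theta}=\frac{1}{n!\,m!}\int_{T^n_\xi}d\omega_n(z)\int_{T^m_{\xi'}}d\omega_m(w)\,\Delta_{n,m}(z,w;\theta)\,p(z,w)\,q^*(z,w). $$ Then the value of $\langle p,q\rangle^{\prime,(\xi,\xi')}_{n,m,\theta}$ is independent of $\xi,\xi'>0$, provided that $\xi'>\xi$.
   Context: Variables $z=(z_1,\ldots,z_n)$, $w=(w_1,\ldots,w_m)$. $\Lambda_{n,m,\theta}$ denotes the algebra of all complex polynomials $p(z,w)$ that are symmetric in $z$ (under $S_n$), symmetric in $w$ (under $S_m$), and satisfy the quasi-invariance condition $\big(\frac{\partial}{\partial z_j}+\theta\frac{\partial}{\partial w_k}\big)p(z,w)\big|_{z_j=w_k}\equiv 0$ for all $j=1,\ldots,n$, $k=1,\ldots,m$. For $\xi>0$, $T^n_\xi=\{z\in\mathbb{C}^n:|z_j|=\xi,\ j=1,\ldots,n\}$, and $d\omega_n(z)=\frac{1}{(2\pi i)^n}\frac{dz_1}{z_1}\cdots\frac{dz_n}{z_n}$ (positively oriented circles). For $\theta>0$, $\Delta_n(z;\theta)=\prod_{1\leq j<k\leq n}\big[(1-z_j/z_k)(1-z_k/z_j)\big]^\theta$ (on $T^n_\xi$ the bracket equals $|1-z_j/z_k|^2\geq 0$ and the nonnegative real power is taken), and $$ \Delta_{n,m}(z,w;\theta)=\frac{\Delta_n(z;\theta)\,\Delta_m(w;1/\theta)}{\prod_{j=1}^n\prod_{k=1}^m(1-z_j/w_k)(1-w_k/z_j)}.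 $$ For a rational function $f\in\mathbb{C}(z,w)$, its conjugate is $f^*(z,w)=\overline{f(\bar z^{-1},\bar w^{-1})}$, where $\bar z^{-1}=(1/\bar z_1,\ldots,1/\bar z_n)$ and $\bar w^{-1}=(1/\bar w_1,\ldots,1/\bar w_m)$. *)

theory Defs
  imports "HOL-Analysis.Analysis"
begin

text \<open>Points of C^n and C^m are represented as functions nat => complex;
  only the coordinates 0..<n (resp. 0..<m) are relevant.\<close>

type_synonym cpt = "nat \<Rightarrow> complex"

definition poly_fun :: "nat \<Rightarrow> nat \<Rightarrow> (cpt \<Rightarrow> cpt \<Rightarrow> complex) \<Rightarrow> bool" where
  "poly_fun n m p \<longleftrightarrow>
     (\<exists>(E :: ((nat \<Rightarrow> nat) \<times> (nat \<Rightarrow> nat)) set) (c :: (nat \<Rightarrow> nat) \<times> (nat \<Rightarrow> nat) \<Rightarrow> complex).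
        finite E \<and>
        (\<forall>z w. p z w = (\<Sum>e\<in>E. c e * (\<Prod>j<n. z j ^ fst e j) * (\<Prod>k<m. w k ^ snd e k))))"

definition Lambda :: "nat \<Rightarrow> nat \<Rightarrow> real \<Rightarrow> (cpt \<Rightarrow> cpt \<Rightarrow> complex) set" where
  "Lambda n m \<theta> = {p. poly_fun n m p
     \<and> (\<forall>\<sigma> z w. \<sigma> permutes {..<n} \<longrightarrow> p (z \<circ> \<sigma>) w = p z w)
     \<and> (\<forall>\<sigma> z w. \<sigma> permutes {..<m} \<longrightarrow> p z (w \<circ> \<sigma>) = p z w)
     \<and> (\<forall>j<n. \<forall>k<m. \<forall>z w. z j = w k \<longrightarrow>
          deriv (\<lambda>t. p (z(j := t)) w) (z j) + complex_of_real \<theta> * deriv (\<lambda>t. p z (w(k := t))) (w k) = 0)}"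

definition conj_fun :: "(cpt \<Rightarrow> cpt \<Rightarrow> complex) \<Rightarrow> cpt \<Rightarrow> cpt \<Rightarrow> complex" where
  "conj_fun f z w = cnj (f (\<lambda>j. 1 / cnj (z j)) (\<lambda>k. 1 / cnj (w k)))"

text \<open>Delta_n(z;theta) on the torus: product over j<k of |1 - z_j/z_k|^(2 theta),
  the nonnegative real power of (1-z_j/z_k)(1-z_k/z_j) = |1-z_j/z_k|^2.\<close>
definition Delta1 :: "nat \<Rightarrow> cpt \<Rightarrow> real \<Rightarrow> complex" where
  "Delta1 n z \<theta> = (\<Prod>k<n. \<Prod>j<k. complex_of_real ((cmod (1 - z j / z k))\<^sup>2 powr \<theta>))"

definition Delta2 :: "nat \<Rightarrow> nat \<Rightarrow> cpt \<Rightarrow> cpt \<Rightarrow> real \<Rightarrow> complex" where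
  "Delta2 n m z w \<theta> = Delta1 n z \<theta> * Delta1 m w (1 / \<theta>) /
      (\<Prod>j<n. \<Prod>k<m. (1 - z j / w k) * (1 - w k / z j))"

text \<open>Angle space [0,2pi]^n with product Lebesgue measure; z_j = xi e^{i phi_j},
  so d omega_n = (2 pi)^{-n} d phi_1 ... d phi_n.\<close>
definition angles :: "nat \<Rightarrow> (nat \<Rightarrow> real) measure" where
  "angles n = Pi\<^sub>M {..<n} (\<lambda>_. lebesgue_on {0..2*pi})"

definition torus_pt :: "real \<Rightarrow> (nat \<Rightarrow> real) \<Rightarrow> cpt" where
  "torus_pt \<xi> \<phi> = (\<lambda>j. complex_of_real \<xi> * cis (\<phi> j))"

definition pairing' :: "nat \<Rightarrow> nat \<Rightarrow> real \<Rightarrow> real \<Rightarrow> real \<Rightarrow>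
    (cpt \<Rightarrow> cpt \<Rightarrow> complex) \<Rightarrow> (cpt \<Rightarrow> cpt \<Rightarrow> complex) \<Rightarrow> complex" where
  "pairing' n m \<theta> \<xi> \<xi>' p q =
     complex_of_real (1 / (fact n * fact m) * (1 / (2 * pi)) ^ (n + m)) *
     (\<integral>\<phi>. (\<integral>\<psi>. Delta2 n m (torus_pt \<xi> \<phi>) (torus_pt \<xi>' \<psi>) \<theta>
                  * p (torus_pt \<xi> \<phi>) (torus_pt \<xi>' \<psi>)
                  * conj_fun q (torus_pt \<xi> \<phi>) (torus_pt \<xi>' \<psi>) \<partial>angles m) \<partial>angles n)"

end

theory Submission
  imports Defs "HOL-Complex_Analysis.Complex_Analysis"
begin


definition per :: "real \<Rightarrow> real" where
  "per x = x - 2*pi* of_int (floor (x/(2*pi)))"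

lemma per_bounds: "0 \<le> per x" "per x < 2*pi"
proof -
  have "of_int (floor (x/(2*pi))) \<le> x/(2*pi)" by linarith
  hence "2*pi* of_int (floor (x/(2*pi))) \<le> 2*pi*(x/(2*pi))" by (intro mult_left_mono) auto
  hence "2*pi* of_int (floor (x/(2*pi))) \<le> x" by simp
  thus "0 \<le> per x" unfolding per_def by simp
  have "x/(2*pi) < of_int (floor (x/(2*pi))) + 1" by linarith
  hence "2*pi*(x/(2*pi)) < 2*pi*(of_int (floor (x/(2*pi))) + 1)" by (intro mult_strict_left_mono) auto
  hence "x < 2*pi* of_int (floor (x/(2*pi))) + 2*pi" by (simp add: algebra_simps)
  thus "per x < 2*pi" unfolding per_def by simp
qed

lemma cis_per: "cis (per x) = cis x"
proof -
  have "cis (per x) = cis x * cis (2*pi* of_int (- floor (x/(2*pi))))"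
    unfolding per_def by (simp add: cis_mult)
  also have "cis (2*pi* of_int (- floor (x/(2*pi)))) = 1"
    by (rule cis_multiple_2pi) simp
  finally show ?thesis by simp
qed

lemma per_add_int: "per (y + 2*pi* of_int k) = per y"
proof -
  have "(y + 2*pi* of_int k)/(2*pi) = y/(2*pi) + of_int k" using pi_gt_zero by (simp add: field_simps)
  hence "floor ((y + 2*pi* of_int k)/(2*pi)) = floor (y/(2*pi)) + k" by simp
  thus ?thesis unfolding per_def by (simp add: algebra_simps)
qed

lemma per_id: "0 \<le> y \<Longrightarrow> y < 2*pi \<Longrightarrow> per y = y"
proof -
  assume "0 \<le> y" "y < 2*pi"
  hence "floor (y/(2*pi)) = 0" using pi_gt_zero by (simp add: floor_eq_iff field_simps)
  thus ?thesis unfolding per_def by simp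
qed

lemma per_shift_eq:
  assumes "0 \<le> x" "x \<le> 2*pi"
  shows "per (x + b) = (if x < 2*pi - per b then x + per b else x + per b - 2*pi)"
proof -
  define k where "k = floor (b/(2*pi))"
  have b: "b = per b + 2*pi* of_int k" unfolding per_def k_def by simp
  have "per (x + b) = per ((x + per b) + 2*pi* of_int k)" by (subst b) (simp add: algebra_simps)
  also have "\<dots> = per (x + per b)" by (rule per_add_int)
  finally have e: "per (x+b) = per (x + per b)" .
  show ?thesis
  proof (cases "x < 2*pi - per b")
    case True thus ?thesis using e per_id[of "x + per b"] per_bounds[of b] assms by auto
  next
    case False
    have "per (x + per b) = per ((x + per b - 2*pi) + 2*pi* of_int 1)" by simp
    also have "\<dots> = per (x + per b - 2*pi)" by (rule per_add_int)
    also have "\<dots> = x + per b - 2*pi" using False per_bounds[of b] assms by (intro per_id) auto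
    finally show ?thesis using e False by simp
  qed
qed

lemma emeasure_lebesgue_transl:
  fixes S :: "real set"
  shows "emeasure lebesgue ((\<lambda>x. x + d) ` S) = emeasure lebesgue S"
  using emeasure_lebesgue_affine[of 1 d S] by simp

lemma sets_lebesgue_transl:
  fixes S :: "real set"
  shows "S \<in> sets lebesgue \<Longrightarrow> (\<lambda>x. x + d) ` S \<in> sets lebesgue"
  using lebesgue_sets_translation[of S d] by (simp add: add.commute)

abbreviation "LL \<equiv> lebesgue_on {0..2*pi}"

lemma shift1_preimage:
  assumes A: "A \<in> sets lebesgue" "A \<subseteq> {0..2*pi}"
  shows "(\<lambda>x. per (x + b)) -` A \<inter> {0..2*pi} \<in> sets lebesgue \<and>
         emeasure lebesgue ((\<lambda>x. per (x + b)) -` A \<inter> {0..2*pi}) = emeasure lebesgue A"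
proof -
  define g where "g = per b"
  have g: "0 \<le> g" "g < 2*pi" using per_bounds unfolding g_def by auto
  define P1 where "P1 = (\<lambda>x. x + (-g)) ` (A \<inter> {g..<2*pi})"
  define P2 where "P2 = (\<lambda>x. x + (2*pi-g)) ` (A \<inter> {0..<g})"
  define E where "E = ((\<lambda>x. per (x + b)) -` A \<inter> {0..2*pi}) \<inter> {2*pi}"
  have PE: "(\<lambda>x. per (x + b)) -` A \<inter> {0..2*pi} = P1 \<union> P2 \<union> E"
  proof (intro set_eqI iffI)
    fix x assume x: "x \<in> (\<lambda>x. per (x + b)) -` A \<inter> {0..2*pi}"
    hence x0: "0 \<le> x" "x \<le> 2*pi" and xa: "per (x+b) \<in> A" by auto
    show "x \<in> P1 \<union> P2 \<union> E"
    proof (cases "x = 2*pi")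
      case True thus ?thesis using x unfolding E_def by auto
    next
      case False
      show ?thesis
      proof (cases "x < 2*pi - g")
        case True
        hence "per (x+b) = x + g" using per_shift_eq[OF x0, of b] g_def by simp
        hence "x + g \<in> A \<inter> {g..<2*pi}" using xa True x0 by auto
        hence "x \<in> P1" unfolding P1_def by (force intro: image_eqI[where x="x+g"])
        thus ?thesis by simp
      next
        case F: False
        hence "per (x+b) = x + g - 2*pi" using per_shift_eq[OF x0, of b] g_def by simp
        hence "x + g - 2*pi \<in> A \<inter> {0..<g}" using xa F x0 False by auto
        hence "x \<in> P2" unfolding P2_def by (force intro: image_eqI[where x="x+g-2*pi"])
        thus ?thesis by simp
      qed
    qed
  next
    fix x assume "x \<in> P1 \<union> P2 \<union> E"
    then consider "x \<in> P1" | "x \<in> P2" | "x \<in> E" by blast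
    thus "x \<in> (\<lambda>x. per (x + b)) -` A \<inter> {0..2*pi}"
    proof cases
      case 1
      then obtain y where y: "y \<in> A" "g \<le> y" "y < 2*pi" "x = y - g" unfolding P1_def by auto
      hence x0: "0 \<le> x" "x \<le> 2*pi" using g by auto
      have "per (x + b) = y" using per_shift_eq[OF x0, of b] y unfolding g_def by auto
      thus ?thesis using y x0 by auto
    next
      case 2
      then obtain y where y: "y \<in> A" "0 \<le> y" "y < g" "x = y + (2*pi - g)" unfolding P2_def by auto
      hence x0: "0 \<le> x" "x \<le> 2*pi" using g by auto
      have "per (x + b) = y" using per_shift_eq[OF x0, of b] y unfolding g_def by auto
      thus ?thesis using y x0 by auto
    qed (auto simp: E_def)
  qed
  have A1: "A \<inter> {g..<2*pi} \<in> sets lebesgue" "A \<inter> {0..<g} \<in> sets lebesgue" using A by auto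
  have M1: "P1 \<in> sets lebesgue" "P2 \<in> sets lebesgue"
    unfolding P1_def P2_def using sets_lebesgue_transl[OF A1(1), of "-g"] sets_lebesgue_transl[OF A1(2), of "2*pi-g"] by auto
  have Efin: "finite E" unfolding E_def by (rule finite_subset[of _ "{2*pi}"]) auto
  have EN: "E \<in> null_sets lebesgue"
    using Efin by (simp add: finite_imp_null_set_lborel null_sets_completionI)
  have disj: "P1 \<inter> P2 = {}" unfolding P1_def P2_def using g by auto
  have "emeasure lebesgue (P1 \<union> P2 \<union> E) = emeasure lebesgue (P1 \<union> P2)"
    using EN M1 by (intro emeasure_Un_null_set) auto
  also have "\<dots> = emeasure lebesgue P1 + emeasure lebesgue P2"
    using M1 disj by (intro plus_emeasure[symmetric]) auto
  also have "\<dots> = emeasure lebesgue (A \<inter> {g..<2*pi}) + emeasure lebesgue (A \<inter> {0..<g})"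
    unfolding P1_def P2_def emeasure_lebesgue_transl ..
  also have "\<dots> = emeasure lebesgue ((A \<inter> {g..<2*pi}) \<union> (A \<inter> {0..<g}))"
    using A1 by (intro plus_emeasure) auto
  also have "(A \<inter> {g..<2*pi}) \<union> (A \<inter> {0..<g}) = A - (A \<inter> {2*pi})" using A g by auto
  also have "emeasure lebesgue (A - (A \<inter> {2*pi})) = emeasure lebesgue A"
  proof (rule emeasure_Diff_null_set)
    show "A \<inter> {2*pi} \<in> null_sets lebesgue"
      by (rule null_sets_completionI, rule finite_imp_null_set_lborel) auto
  qed (use A in auto)
  finally have em: "emeasure lebesgue (P1 \<union> P2 \<union> E) = emeasure lebesgue A" .
  have "P1 \<union> P2 \<union> E \<in> sets lebesgue" using M1 EN by auto
  thus ?thesis using PE em by simp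
qed

lemma shift1_measurable: "(\<lambda>x. per (x + b)) \<in> measurable LL LL"
proof (rule measurableI)
  fix x assume "x \<in> space LL" thus "per (x+b) \<in> space LL"
    using per_bounds[of "x+b"] by auto
next
  fix A assume "A \<in> sets LL"
  hence A: "A \<in> sets lebesgue" "A \<subseteq> {0..2*pi}" by (auto simp: sets_restrict_space_iff)
  have "(\<lambda>x. per (x + b)) -` A \<inter> space LL = (\<lambda>x. per (x + b)) -` A \<inter> {0..2*pi}" by simp
  thus "(\<lambda>x. per (x + b)) -` A \<inter> space LL \<in> sets LL"
    using shift1_preimage[OF A, of b] by (auto simp: sets_restrict_space_iff)
qed

lemma shift1_distr: "distr LL LL (\<lambda>x. per (x + b)) = LL"
proof (rule measure_eqI)
  fix A assume "A \<in> sets (distr LL LL (\<lambda>x. per (x + b)))"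
  hence A: "A \<in> sets lebesgue" "A \<subseteq> {0..2*pi}" by (auto simp: sets_restrict_space_iff)
  have "emeasure (distr LL LL (\<lambda>x. per (x + b))) A = emeasure LL ((\<lambda>x. per (x + b)) -` A \<inter> space LL)"
    using A by (intro emeasure_distr shift1_measurable) (auto simp: sets_restrict_space_iff)
  also have "\<dots> = emeasure lebesgue ((\<lambda>x. per (x + b)) -` A \<inter> {0..2*pi})"
    using shift1_preimage[OF A, of b] by (subst emeasure_restrict_space) auto
  also have "\<dots> = emeasure lebesgue A" using shift1_preimage[OF A, of b] by simp
  also have "\<dots> = emeasure LL A" using A by (subst emeasure_restrict_space) auto
  finally show "emeasure (distr LL LL (\<lambda>x. per (x + b))) A = emeasure LL A" .
qed simp



definition shiftv :: "nat \<Rightarrow> real \<Rightarrow> (nat \<Rightarrow> real) \<Rightarrow> (nat \<Rightarrow> real)" where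
  "shiftv n b \<phi> = (\<lambda>j\<in>{..<n}. per (\<phi> j + b))"

lemma finite_measure_LL: "finite_measure LL"
  by (simp add: finite_measure_lebesgue_on)

lemma sigma_finite_LL: "sigma_finite_measure LL"
  using finite_measure_LL finite_measure_def by blast

interpretation LLprod: product_sigma_finite "\<lambda>_::nat. LL"
  unfolding product_sigma_finite_def using sigma_finite_LL by simp

lemma shiftv_measurable: "shiftv n b \<in> measurable (angles n) (angles n)"
  unfolding shiftv_def angles_def
proof (intro measurable_restrict)
  fix j assume "j \<in> {..<n}"
  thus "(\<lambda>\<phi>. per (\<phi> j + b)) \<in> measurable (Pi\<^sub>M {..<n} (\<lambda>_. LL)) LL"
    by (intro measurable_compose[where f="\<lambda>\<phi>. \<phi> j" and g="\<lambda>x. per(x+b)"])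
      (auto intro: measurable_component_singleton shift1_measurable)
qed

lemma shiftv_distr: "distr (angles n) (angles n) (shiftv n b) = angles n"
  unfolding angles_def
proof (rule LLprod.PiM_eqI)
  fix A assume A: "\<And>i. i \<in> {..<n} \<Longrightarrow> A i \<in> sets LL"
  let ?f = "\<lambda>x. per (x + b)"
  have pre: "shiftv n b -` Pi\<^sub>E {..<n} A \<inter> space (Pi\<^sub>M {..<n} (\<lambda>_. LL)) =
        Pi\<^sub>E {..<n} (\<lambda>i. ?f -` A i \<inter> space LL)"
    by (auto simp: shiftv_def space_PiM PiE_iff extensional_def)
  have "emeasure (distr (Pi\<^sub>M {..<n} (\<lambda>_. LL)) (Pi\<^sub>M {..<n} (\<lambda>_. LL)) (shiftv n b)) (Pi\<^sub>E {..<n} A)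
      = emeasure (Pi\<^sub>M {..<n} (\<lambda>_. LL)) (shiftv n b -` Pi\<^sub>E {..<n} A \<inter> space (Pi\<^sub>M {..<n} (\<lambda>_. LL)))"
    using shiftv_measurable[of n b] A unfolding angles_def
    by (intro emeasure_distr) (auto intro!: sets_PiM_I_finite)
  also have "\<dots> = (\<Prod>i<n. emeasure LL (?f -` A i \<inter> space LL))"
    unfolding pre using A measurable_sets[OF shift1_measurable]
    by (intro LLprod.emeasure_PiM) auto
  also have "\<dots> = (\<Prod>i<n. emeasure LL (A i))"
  proof (rule prod.cong)
    fix i assume "i \<in> {..<n}"
    hence "emeasure LL (A i) = emeasure (distr LL LL ?f) (A i)" using shift1_distr by simp
    also have "\<dots> = emeasure LL (?f -` A i \<inter> space LL)"
      using A \<open>i \<in> {..<n}\<close> by (intro emeasure_distr shift1_measurable) auto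
    finally show "emeasure LL (?f -` A i \<inter> space LL) = emeasure LL (A i)" by simp
  qed simp
  finally show "emeasure (distr (Pi\<^sub>M {..<n} (\<lambda>_. LL)) (Pi\<^sub>M {..<n} (\<lambda>_. LL)) (shiftv n b)) (Pi\<^sub>E {..<n} A)
      = (\<Prod>i<n. emeasure LL (A i))" .
qed simp_all



lemma measure_LL: "measure LL (space LL) = 2*pi"
  by (simp add: measure_restrict_space)

lemma contour_circle_avg:
  fixes f :: "complex \<Rightarrow> complex"
  assumes hol: "f holomorphic_on (ball 0 R - {0})" and t: "0 < t" "t < R"
  shows "contour_integral (circlepath 0 t) (\<lambda>s. f s / s) = \<i> * integral\<^sup>L LL (\<lambda>a. f (t * cis a))"
proof -
  have cont: "continuous_on {0..2*pi} (\<lambda>a. f (of_real t * cis a))"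
  proof (rule continuous_on_compose2[OF holomorphic_on_imp_continuous_on[OF hol]])
    show "continuous_on {0..2*pi} (\<lambda>a. of_real t * cis a)" by (intro continuous_intros)
    show "(\<lambda>a. of_real t * cis a) ` {0..2*pi} \<subseteq> ball 0 R - {0}"
      using t by (auto simp: norm_mult)
  qed
  have "contour_integral (circlepath 0 t) (\<lambda>s. f s / s) =
        integral {0..2*pi} (\<lambda>x. f (0 + t * cis x) / (0 + t * cis x) * t * \<i> * cis x)"
    unfolding circlepath_def by (rule contour_integral_part_circlepath_eq) simp
  also have "\<dots> = integral {0..2*pi} (\<lambda>x. \<i> * f (t * cis x))"
    using t by (intro integral_cong) (simp add: field_simps)
  also have "\<dots> = integral\<^sup>L LL (\<lambda>x. \<i> * f (t * cis x))"
    by (intro integral_unique has_integral_integral_lebesgue_on continuous_imp_integrable_real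
          continuous_intros cont) auto
  also have "\<dots> = \<i> * integral\<^sup>L LL (\<lambda>a. f (t * cis a))" by simp
  finally show ?thesis .
qed

lemma circle_avg_eq:
  fixes f :: "complex \<Rightarrow> complex" and t1 t2 :: real
  assumes hol: "f holomorphic_on (ball 0 R - {0})"
    and "0 < t1" "t1 < R" "0 < t2" "t2 < R"
  shows "integral\<^sup>L LL (\<lambda>a. f (t1 * cis a)) = integral\<^sup>L LL (\<lambda>a. f (t2 * cis a))"
proof -
  have hol': "(\<lambda>s. f s / s) holomorphic_on (ball 0 R - {0})"
    using hol by (intro holomorphic_intros) auto
  have key: "contour_integral (circlepath 0 a) (\<lambda>s. f s / s) = contour_integral (circlepath 0 b) (\<lambda>s. f s / s)"
    if "0 < a" "a \<le> b" "b < R" for a b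
  proof -
    have "cball 0 b \<subseteq> ball (0::complex) R" using that by (auto simp: cball_subset_ball_iff)
    from contour_integral_circlepath_eq(3)[OF open_ball hol' that(1,2) this] show ?thesis by (rule sym)
  qed
  have "contour_integral (circlepath 0 t1) (\<lambda>s. f s / s) = contour_integral (circlepath 0 t2) (\<lambda>s. f s / s)"
  proof (cases "t1 \<le> t2")
    case True thus ?thesis using key[of t1 t2] assms(2,5) by blast
  next
    case False thus ?thesis using key[of t2 t1] assms(4,3) by simp
  qed
  thus ?thesis unfolding contour_circle_avg[OF hol assms(2,3)] contour_circle_avg[OF hol assms(4,5)] by simp
qed

lemma avg_indep:
  fixes F :: "complex \<Rightarrow> 'a \<Rightarrow> complex" and X :: "'a measure" and t1 t2 :: real
  assumes fin: "finite_measure X"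
    and hol: "\<And>x. x \<in> space X \<Longrightarrow> (\<lambda>s. F s x) holomorphic_on (ball 0 R - {0})"
    and rot: "\<And>(t::real) a. 0 < t \<Longrightarrow> t < R \<Longrightarrow> integral\<^sup>L X (F (t * cis a)) = integral\<^sup>L X (F t)"
    and int: "\<And>t::real. 0 < t \<Longrightarrow> t < R \<Longrightarrow> integrable (LL \<Otimes>\<^sub>M X) (\<lambda>(a,x). F (t * cis a) x)"
    and t: "0 < t1" "t1 < R" "0 < t2" "t2 < R"
  shows "integral\<^sup>L X (F t1) = integral\<^sup>L X (F t2)"
proof -
  interpret pair_sigma_finite LL X
    unfolding pair_sigma_finite_def using sigma_finite_LL fin finite_measure_def by blast
  define avg where "avg t = (\<integral>x. (\<integral>a. F (t * cis a) x \<partial>LL) \<partial>X) / (2*pi)" for t :: real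
  have eq: "integral\<^sup>L X (F t) = avg t" if "0 < t" "t < R" for t
  proof -
    have "(\<integral>a. integral\<^sup>L X (F (t * cis a)) \<partial>LL) = (\<integral>a. integral\<^sup>L X (F t) \<partial>LL)"
      by (simp only: rot[OF that])
    also have "\<dots> = 2*pi * integral\<^sup>L X (F t)" using measure_LL by (simp add: scaleR_conv_of_real)
    finally have h: "(\<integral>a. integral\<^sup>L X (F (t * cis a)) \<partial>LL) = 2*pi * integral\<^sup>L X (F t)" .
    have "integral\<^sup>L X (F t) = (2*pi * integral\<^sup>L X (F t)) / (2*pi)" by simp
    also have "\<dots> = (\<integral>a. (\<integral>x. F (t * cis a) x \<partial>X) \<partial>LL) / (2*pi)" by (simp only: h)
    also have "(\<integral>a. (\<integral>x. F (t * cis a) x \<partial>X) \<partial>LL) = (\<integral>x. (\<integral>a. F (t * cis a) x \<partial>LL) \<partial>X)"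
      using Fubini_integral[of "\<lambda>a x. F (t * cis a) x"] int[OF that] by simp
    finally show ?thesis unfolding avg_def .
  qed
  have ae: "(\<integral>a. F (t1 * cis a) x \<partial>LL) = (\<integral>a. F (t2 * cis a) x \<partial>LL)" if "x \<in> space X" for x
    using circle_avg_eq[OF hol[OF that] t] .
  have "avg t1 = avg t2" unfolding avg_def
    using Bochner_Integration.integral_cong[OF refl ae, of X] by simp
  thus ?thesis using eq[OF t(1,2)] eq[OF t(3,4)] by (simp only:)
qed



lemma poly_funE:
  assumes "poly_fun n m p"
  obtains E c where "finite E"
    "\<And>z w. p z w = (\<Sum>e\<in>E. c e * (\<Prod>j<n. z j ^ fst e j) * (\<Prod>k<m. w k ^ snd e k))"
  using assms unfolding poly_fun_def by blast

lemma poly_cong: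
  assumes "poly_fun n m p" "\<And>j. j < n \<Longrightarrow> z j = z' j" "\<And>k. k < m \<Longrightarrow> w k = w' k"
  shows "p z w = p z' w'"
proof -
  obtain E c where E: "finite E"
    "\<And>z w. p z w = (\<Sum>e\<in>E. c e * (\<Prod>j<n. z j ^ fst e j) * (\<Prod>k<m. w k ^ snd e k))"
    using poly_funE[OF assms(1)] by blast
  show ?thesis unfolding E(2) using assms(2,3)
    by (intro sum.cong refl arg_cong2[where f="(*)"] prod.cong) auto
qed

lemma poly_cnj:
  assumes "poly_fun n m q"
  shows "poly_fun n m (\<lambda>z w. cnj (q (\<lambda>j. cnj (z j)) (\<lambda>k. cnj (w k))))"
proof -
  obtain E c where E: "finite E"
    "\<And>z w. q z w = (\<Sum>e\<in>E. c e * (\<Prod>j<n. z j ^ fst e j) * (\<Prod>k<m. w k ^ snd e k))"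
    using poly_funE[OF assms(1)] by blast
  show ?thesis unfolding poly_fun_def
    by (rule exI[of _ E], rule exI[of _ "\<lambda>e. cnj (c e)"]) (simp add: E)
qed

lemma poly_holo:
  assumes "poly_fun n m p"
    and "\<And>j. j < n \<Longrightarrow> (\<lambda>s. Z s j) holomorphic_on S"
    and "\<And>k. k < m \<Longrightarrow> (\<lambda>s. W s k) holomorphic_on S"
  shows "(\<lambda>s. p (Z s) (W s)) holomorphic_on S"
proof -
  obtain E c where E: "finite E"
    "\<And>z w. p z w = (\<Sum>e\<in>E. c e * (\<Prod>j<n. z j ^ fst e j) * (\<Prod>k<m. w k ^ snd e k))"
    using poly_funE[OF assms(1)] by blast
  show ?thesis unfolding E(2) using assms(2,3)
    by (intro holomorphic_intros) auto
qed

lemma poly_cnj_holo: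
  assumes "poly_fun n m q"
    and "\<And>j. j < n \<Longrightarrow> (\<lambda>s. cnj (Z s j)) holomorphic_on S"
    and "\<And>k. k < m \<Longrightarrow> (\<lambda>s. cnj (W s k)) holomorphic_on S"
  shows "(\<lambda>s. cnj (q (Z s) (W s))) holomorphic_on S"
proof -
  have "(\<lambda>s. (\<lambda>z w. cnj (q (\<lambda>j. cnj (z j)) (\<lambda>k. cnj (w k)))) (\<lambda>j. cnj (Z s j)) (\<lambda>k. cnj (W s k)))
         holomorphic_on S"
    by (rule poly_holo[OF poly_cnj[OF assms(1)]]) (use assms(2,3) in auto)
  thus ?thesis by simp
qed

lemma poly_meas:
  assumes "poly_fun n m p"
    and "\<And>j. j < n \<Longrightarrow> (\<lambda>y. Z y j) \<in> borel_measurable M"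
    and "\<And>k. k < m \<Longrightarrow> (\<lambda>y. W y k) \<in> borel_measurable M"
  shows "(\<lambda>y. p (Z y) (W y)) \<in> borel_measurable M"
proof -
  obtain E c where E: "finite E"
    "\<And>z w. p z w = (\<Sum>e\<in>E. c e * (\<Prod>j<n. z j ^ fst e j) * (\<Prod>k<m. w k ^ snd e k))"
    using poly_funE[OF assms(1)] by blast
  show ?thesis unfolding E(2) using assms(2,3)
    by (intro borel_measurable_sum borel_measurable_times borel_measurable_prod borel_measurable_power
         borel_measurable_const) auto
qed

lemma poly_bound:
  assumes "poly_fun n m p" "0 \<le> R1" "0 \<le> R2"
  obtains B where "\<And>z w. (\<And>j. j < n \<Longrightarrow> cmod (z j) \<le> R1) \<Longrightarrow> (\<And>k. k < m \<Longrightarrow> cmod (w k) \<le> R2)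
      \<Longrightarrow> cmod (p z w) \<le> B"
proof -
  obtain E c where E: "finite E"
    "\<And>z w. p z w = (\<Sum>e\<in>E. c e * (\<Prod>j<n. z j ^ fst e j) * (\<Prod>k<m. w k ^ snd e k))"
    using poly_funE[OF assms(1)] by blast
  define B where "B = (\<Sum>e\<in>E. cmod (c e) * (\<Prod>j<n. R1 ^ fst e j) * (\<Prod>k<m. R2 ^ snd e k))"
  have "cmod (p z w) \<le> B" if z: "\<And>j. j < n \<Longrightarrow> cmod (z j) \<le> R1" and w: "\<And>k. k < m \<Longrightarrow> cmod (w k) \<le> R2" for z w
  proof -
    have "cmod (p z w) \<le> (\<Sum>e\<in>E. cmod (c e * (\<Prod>j<n. z j ^ fst e j) * (\<Prod>k<m. w k ^ snd e k)))"
      unfolding E(2) by (rule norm_sum)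
    also have "\<dots> \<le> B" unfolding B_def
    proof (rule sum_mono)
      fix e assume "e \<in> E"
      have 1: "cmod (\<Prod>j<n. z j ^ fst e j) \<le> (\<Prod>j<n. R1 ^ fst e j)"
        unfolding prod_norm[symmetric] norm_power using z by (intro prod_mono conjI power_mono) auto
      have 2: "cmod (\<Prod>k<m. w k ^ snd e k) \<le> (\<Prod>k<m. R2 ^ snd e k)"
        unfolding prod_norm[symmetric] norm_power using w by (intro prod_mono conjI power_mono) auto
      show "cmod (c e * (\<Prod>j<n. z j ^ fst e j) * (\<Prod>k<m. w k ^ snd e k))
            \<le> cmod (c e) * (\<Prod>j<n. R1 ^ fst e j) * (\<Prod>k<m. R2 ^ snd e k)"
        unfolding norm_mult using 1 2
        using assms(2,3) by (intro mult_mono) (auto intro!: mult_nonneg_nonneg prod_nonneg)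
    qed
    finally show ?thesis .
  qed
  thus ?thesis using that by blast
qed



definition Gf :: "nat \<Rightarrow> nat \<Rightarrow> real \<Rightarrow> (cpt \<Rightarrow> cpt \<Rightarrow> complex) \<Rightarrow> (cpt \<Rightarrow> cpt \<Rightarrow> complex)
   \<Rightarrow> cpt \<Rightarrow> cpt \<Rightarrow> cpt \<Rightarrow> cpt \<Rightarrow> complex" where
  "Gf n m \<theta> p q z w zq wq = Delta2 n m z w \<theta> * p z w * cnj (q zq wq)"

definition Hx :: "nat \<Rightarrow> nat \<Rightarrow> real \<Rightarrow> (cpt \<Rightarrow> cpt \<Rightarrow> complex) \<Rightarrow> (cpt \<Rightarrow> cpt \<Rightarrow> complex)
   \<Rightarrow> complex \<Rightarrow> complex \<Rightarrow> (nat \<Rightarrow> real) \<Rightarrow> (nat \<Rightarrow> real) \<Rightarrow> complex" where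
  "Hx n m \<theta> p q s v \<phi> \<psi> = Gf n m \<theta> p q (\<lambda>j. s * cis (\<phi> j)) (\<lambda>k. cis (\<psi> k) / v)
      (\<lambda>j. cis (\<phi> j) / cnj s) (\<lambda>k. cnj v * cis (\<psi> k))"

lemma Delta1_cong: "(\<And>j. j < n \<Longrightarrow> z j = z' j) \<Longrightarrow> Delta1 n z \<theta> = Delta1 n z' \<theta>"
  unfolding Delta1_def by (intro prod.cong refl) auto

lemma Delta2_cong: "(\<And>j. j < n \<Longrightarrow> z j = z' j) \<Longrightarrow> (\<And>k. k < m \<Longrightarrow> w k = w' k) \<Longrightarrow>
    Delta2 n m z w \<theta> = Delta2 n m z' w' \<theta>"
  unfolding Delta2_def
  by (intro arg_cong2[where f="(/)"] arg_cong2[where f="(*)"] Delta1_cong prod.cong refl) auto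

lemma Gf_cong:
  assumes "poly_fun n m p" "poly_fun n m q"
    "\<And>j. j < n \<Longrightarrow> z j = z' j" "\<And>k. k < m \<Longrightarrow> w k = w' k"
    "\<And>j. j < n \<Longrightarrow> zq j = zq' j" "\<And>k. k < m \<Longrightarrow> wq k = wq' k"
  shows "Gf n m \<theta> p q z w zq wq = Gf n m \<theta> p q z' w' zq' wq'"
  unfolding Gf_def using assms Delta2_cong[of n z z' m w w' \<theta>] poly_cong[OF assms(1), of z z' w w']
    poly_cong[OF assms(2), of zq zq' wq wq'] by simp

lemma Hx_cong:
  assumes "poly_fun n m p" "poly_fun n m q"
    "\<And>j. j < n \<Longrightarrow> cis (\<phi> j) = cis (\<phi>' j)" "\<And>k. k < m \<Longrightarrow> cis (\<psi> k) = cis (\<psi>' k)"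
  shows "Hx n m \<theta> p q s v \<phi> \<psi> = Hx n m \<theta> p q s v \<phi>' \<psi>'"
  unfolding Hx_def using assms by (intro Gf_cong) auto

lemma Hx_rot1: "Hx n m \<theta> p q (s * cis a) v \<phi> \<psi> = Hx n m \<theta> p q s v (\<lambda>j. \<phi> j + a) \<psi>"
proof -
  have 1: "(\<lambda>j. s * cis a * cis (\<phi> j)) = (\<lambda>j. s * cis (\<phi> j + a))"
    by (auto simp: cis_mult add.commute)
  have 2: "(\<lambda>j. cis (\<phi> j) / cnj (s * cis a)) = (\<lambda>j. cis (\<phi> j + a) / cnj s)"
  proof
    fix j
    have "cnj (s * cis a) = cnj s * cis (-a)" by (simp add: cis_cnj)
    moreover have "cis (\<phi> j) / cis (-a) = cis (\<phi> j + a)"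
      using cis_divide[of "\<phi> j" "-a"] by simp
    ultimately show "cis (\<phi> j) / cnj (s * cis a) = cis (\<phi> j + a) / cnj s"
      by (metis divide_divide_eq_left mult.commute)
  qed
  show ?thesis unfolding Hx_def 1 2 ..
qed

lemma Hx_rot2: "Hx n m \<theta> p q s (v * cis a) \<phi> \<psi> = Hx n m \<theta> p q s v \<phi> (\<lambda>k. \<psi> k - a)"
proof -
  have 1: "(\<lambda>k. cis (\<psi> k) / (v * cis a)) = (\<lambda>k. cis (\<psi> k - a) / v)"
  proof
    fix k
    have "cis (\<psi> k) / cis a = cis (\<psi> k - a)" by (simp add: cis_divide)
    thus "cis (\<psi> k) / (v * cis a) = cis (\<psi> k - a) / v"
      by (metis divide_divide_eq_left mult.commute)
  qed
  have 2: "(\<lambda>k. cnj (v * cis a) * cis (\<psi> k)) = (\<lambda>k. cnj v * cis (\<psi> k - a))"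
  proof
    fix k
    have "cis (-a) * cis (\<psi> k) = cis (\<psi> k - a)" by (simp add: cis_mult)
    thus "cnj (v * cis a) * cis (\<psi> k) = cnj v * cis (\<psi> k - a)"
      by (simp add: cis_cnj mult.assoc)
  qed
  show ?thesis unfolding Hx_def 1 2 ..
qed

lemma Hx_torus:
  assumes "0 < \<xi>" "0 < \<xi>'"
  shows "Delta2 n m (torus_pt \<xi> \<phi>) (torus_pt \<xi>' \<psi>) \<theta> * p (torus_pt \<xi> \<phi>) (torus_pt \<xi>' \<psi>)
           * conj_fun q (torus_pt \<xi> \<phi>) (torus_pt \<xi>' \<psi>) = Hx n m \<theta> p q \<xi> (1/\<xi>') \<phi> \<psi>"
proof -
  have 1: "torus_pt \<xi>' \<psi> = (\<lambda>k. cis (\<psi> k) / complex_of_real (1/\<xi>'))"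
    unfolding torus_pt_def by auto
  have 2: "(\<lambda>j. 1 / cnj (torus_pt \<xi> \<phi> j)) = (\<lambda>j. cis (\<phi> j) / cnj (complex_of_real \<xi>))"
  proof
    fix j
    have "cnj (cis (\<phi> j)) * cis (\<phi> j) = 1" by (simp add: cis_cnj cis_mult)
    thus "1 / cnj (torus_pt \<xi> \<phi> j) = cis (\<phi> j) / cnj (complex_of_real \<xi>)"
      unfolding torus_pt_def using assms by (simp add: field_simps)
  qed
  have 3: "(\<lambda>k. 1 / cnj (torus_pt \<xi>' \<psi> k)) = (\<lambda>k. cnj (complex_of_real (1/\<xi>')) * cis (\<psi> k))"
  proof
    fix k
    have "cnj (cis (\<psi> k)) * cis (\<psi> k) = 1" by (simp add: cis_cnj cis_mult)
    thus "1 / cnj (torus_pt \<xi>' \<psi> k) = cnj (complex_of_real (1/\<xi>')) * cis (\<psi> k)"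
      unfolding torus_pt_def using assms by (simp add: field_simps)
  qed
  have 0: "(\<lambda>j. complex_of_real \<xi> * cis (\<phi> j)) = torus_pt \<xi> \<phi>" by (simp add: torus_pt_def)
  show ?thesis
    unfolding Hx_def Gf_def conj_fun_def 2 3 0 1[symmetric] ..
qed



definition den :: "nat \<Rightarrow> nat \<Rightarrow> complex \<Rightarrow> complex \<Rightarrow> (nat \<Rightarrow> real) \<Rightarrow> (nat \<Rightarrow> real) \<Rightarrow> complex" where
  "den n m s v \<phi> \<psi> = (\<Prod>j<n. \<Prod>k<m. (1 - s * cis (\<phi> j) / (cis (\<psi> k) / v)) * (1 - cis (\<psi> k) / v / (s * cis (\<phi> j))))"

lemma Delta1_scale: "s \<noteq> 0 \<Longrightarrow> Delta1 n (\<lambda>j. s * c j) \<theta> = Delta1 n c \<theta>"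
  unfolding Delta1_def by (intro prod.cong refl) simp

lemma Delta1_div: assumes "v \<noteq> 0" shows "Delta1 n (\<lambda>j. c j / v) \<theta> = Delta1 n c \<theta>"
  unfolding Delta1_def
proof (intro prod.cong refl)
  fix k j
  have "c j / v / (c k / v) = c j / c k" using assms by (cases "c k = 0") (simp_all add: field_simps)
  thus "complex_of_real ((cmod (1 - c j / v / (c k / v)))\<^sup>2 powr \<theta>) =
        complex_of_real ((cmod (1 - c j / c k))\<^sup>2 powr \<theta>)" by (simp only:)
qed

lemma factor_nz:
  assumes "s \<noteq> 0" "v \<noteq> 0" "cmod s * cmod v < 1"
  shows "1 - s * cis a / (cis b / v) \<noteq> 0" "1 - cis b / v / (s * cis a) \<noteq> 0"
proof -
  have n1: "cmod (s * cis a / (cis b / v)) = cmod s * cmod v" by (simp add: norm_mult norm_divide)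
  show "1 - s * cis a / (cis b / v) \<noteq> 0"
  proof
    assume "1 - s * cis a / (cis b / v) = 0"
    hence "s * cis a / (cis b / v) = 1" by simp
    thus False using n1 assms(3) by simp
  qed
  have n2: "cmod (cis b / v / (s * cis a)) = 1 / (cmod s * cmod v)" by (simp add: norm_mult norm_divide)
  have "1 < 1 / (cmod s * cmod v)" using assms by (simp add: field_simps)
  show "1 - cis b / v / (s * cis a) \<noteq> 0"
  proof
    assume "1 - cis b / v / (s * cis a) = 0"
    hence "cis b / v / (s * cis a) = 1" by simp
    thus False using n2 \<open>1 < 1 / (cmod s * cmod v)\<close> by simp
  qed
qed

lemma den_nz:
  assumes "s \<noteq> 0" "v \<noteq> 0" "cmod s * cmod v < 1"
  shows "den n m s v \<phi> \<psi> \<noteq> 0"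
proof -
  have f: "(1 - s * cis a / (cis b / v)) * (1 - cis b / v / (s * cis a)) \<noteq> 0" for a b
    using factor_nz(1)[OF assms, of a b] factor_nz(2)[OF assms, of b a] by (simp only: mult_eq_0_iff de_Morgan_disj) blast
  have "(\<Prod>k<m. (1 - s * cis (\<phi> j) / (cis (\<psi> k) / v)) * (1 - cis (\<psi> k) / v / (s * cis (\<phi> j)))) \<noteq> 0" for j
    using f by (subst prod_zero_iff) auto
  thus ?thesis unfolding den_def by (subst prod_zero_iff) auto
qed

lemma Hx_alt:
  assumes "s \<noteq> 0" "v \<noteq> 0"
  shows "Hx n m \<theta> p q s v \<phi> \<psi> = Delta1 n (\<lambda>j. cis (\<phi> j)) \<theta> * Delta1 m (\<lambda>k. cis (\<psi> k)) (1/\<theta>)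
      / den n m s v \<phi> \<psi> * p (\<lambda>j. s * cis (\<phi> j)) (\<lambda>k. cis (\<psi> k) / v)
      * cnj (q (\<lambda>j. cis (\<phi> j) / cnj s) (\<lambda>k. cnj v * cis (\<psi> k)))"
  unfolding Hx_def Gf_def Delta2_def den_def Delta1_scale[OF assms(1)] Delta1_div[OF assms(2)] ..

lemma Hx_hol1:
  assumes p: "poly_fun n m p" and q: "poly_fun n m q" and v: "v \<noteq> 0"
  shows "(\<lambda>s. Hx n m \<theta> p q s v \<phi> \<psi>) holomorphic_on (ball 0 (1 / cmod v) - {0})"
proof -
  let ?S = "ball 0 (1 / cmod v) - {0}"
  have S: "s \<noteq> 0" "cmod s * cmod v < 1" if "s \<in> ?S" for s
    using that v by (auto simp: field_simps)
  have "(\<lambda>s. Delta1 n (\<lambda>j. cis (\<phi> j)) \<theta> * Delta1 m (\<lambda>k. cis (\<psi> k)) (1/\<theta>)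
      / den n m s v \<phi> \<psi> * p (\<lambda>j. s * cis (\<phi> j)) (\<lambda>k. cis (\<psi> k) / v)
      * cnj (q (\<lambda>j. cis (\<phi> j) / cnj s) (\<lambda>k. cnj v * cis (\<psi> k)))) holomorphic_on ?S"
  proof (intro holomorphic_intros)
    show "(\<lambda>s. den n m s v \<phi> \<psi>) holomorphic_on ?S" unfolding den_def
      using S v by (intro holomorphic_intros) auto
    show "den n m s v \<phi> \<psi> \<noteq> 0" if "s \<in> ?S" for s using den_nz S[OF that] v by blast
    show "(\<lambda>s. p (\<lambda>j. s * cis (\<phi> j)) (\<lambda>k. cis (\<psi> k) / v)) holomorphic_on ?S"
      by (rule poly_holo[OF p]) (auto intro: holomorphic_intros)
    show "(\<lambda>s. cnj (q (\<lambda>j. cis (\<phi> j) / cnj s) (\<lambda>k. cnj v * cis (\<psi> k)))) holomorphic_on ?S"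
    proof (rule poly_cnj_holo[OF q])
      fix j
      have "(\<lambda>s. cnj (cis (\<phi> j)) / s) holomorphic_on ?S" by (intro holomorphic_intros) auto
      thus "(\<lambda>s. cnj (cis (\<phi> j) / cnj s)) holomorphic_on ?S" by simp
    qed (auto intro: holomorphic_intros)
  qed
  thus ?thesis
    by (rule holomorphic_cong[THEN iffD1, rotated 2]) (use S v Hx_alt in auto)
qed

lemma Hx_hol2:
  assumes p: "poly_fun n m p" and q: "poly_fun n m q" and s: "s \<noteq> 0"
  shows "(\<lambda>v. Hx n m \<theta> p q s v \<phi> \<psi>) holomorphic_on (ball 0 (1 / cmod s) - {0})"
proof -
  let ?S = "ball 0 (1 / cmod s) - {0}"
  have S: "v \<noteq> 0" "cmod s * cmod v < 1" if "v \<in> ?S" for v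
    using that s by (auto simp: field_simps)
  have "(\<lambda>v. Delta1 n (\<lambda>j. cis (\<phi> j)) \<theta> * Delta1 m (\<lambda>k. cis (\<psi> k)) (1/\<theta>)
      / den n m s v \<phi> \<psi> * p (\<lambda>j. s * cis (\<phi> j)) (\<lambda>k. cis (\<psi> k) / v)
      * cnj (q (\<lambda>j. cis (\<phi> j) / cnj s) (\<lambda>k. cnj v * cis (\<psi> k)))) holomorphic_on ?S"
  proof (intro holomorphic_intros)
    show "(\<lambda>v. den n m s v \<phi> \<psi>) holomorphic_on ?S" unfolding den_def
      using S s by (intro holomorphic_intros) auto
    show "den n m s v \<phi> \<psi> \<noteq> 0" if "v \<in> ?S" for v using den_nz S[OF that] s by blast
    show "(\<lambda>v. p (\<lambda>j. s * cis (\<phi> j)) (\<lambda>k. cis (\<psi> k) / v)) holomorphic_on ?S"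
      by (rule poly_holo[OF p]) (use S in \<open>auto intro!: holomorphic_intros\<close>)
    show "(\<lambda>v. cnj (q (\<lambda>j. cis (\<phi> j) / cnj s) (\<lambda>k. cnj v * cis (\<psi> k)))) holomorphic_on ?S"
    proof (rule poly_cnj_holo[OF q])
      fix k
      have "(\<lambda>v. v * cnj (cis (\<psi> k))) holomorphic_on ?S" by (intro holomorphic_intros)
      thus "(\<lambda>v. cnj (cnj v * cis (\<psi> k))) holomorphic_on ?S" by simp
    qed (auto intro: holomorphic_intros)
  qed
  thus ?thesis
    by (rule holomorphic_cong[THEN iffD1, rotated 2]) (use S s Hx_alt in auto)
qed



lemma Hx_meas:
  assumes p: "poly_fun n m p" and q: "poly_fun n m q"
    and S[measurable]: "S \<in> borel_measurable M" and V[measurable]: "V \<in> borel_measurable M"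
    and Phi: "\<And>j. j < n \<Longrightarrow> (\<lambda>y. \<Phi> y j) \<in> borel_measurable M"
    and Psi: "\<And>k. k < m \<Longrightarrow> (\<lambda>y. \<Psi> y k) \<in> borel_measurable M"
  shows "(\<lambda>y. Hx n m \<theta> p q (S y) (V y) (\<Phi> y) (\<Psi> y)) \<in> borel_measurable M"
proof -
  have cP[measurable]: "(\<lambda>y. cis (\<Phi> y j)) \<in> borel_measurable M" if "j < n" for j
    by (rule measurable_compose[OF Phi[OF that] borel_measurable_continuous_onI]) (intro continuous_intros)
  have cQ[measurable]: "(\<lambda>y. cis (\<Psi> y k)) \<in> borel_measurable M" if "k < m" for k
    by (rule measurable_compose[OF Psi[OF that] borel_measurable_continuous_onI]) (intro continuous_intros)
  have cS[measurable]: "(\<lambda>y. cnj (S y)) \<in> borel_measurable M"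
    by (rule measurable_compose[OF S borel_measurable_continuous_onI]) (intro continuous_intros)
  have cV[measurable]: "(\<lambda>y. cnj (V y)) \<in> borel_measurable M"
    by (rule measurable_compose[OF V borel_measurable_continuous_onI]) (intro continuous_intros)
  have D1: "(\<lambda>y. Delta1 n (\<lambda>j. S y * cis (\<Phi> y j)) \<theta>) \<in> borel_measurable M"
    unfolding Delta1_def
    by (intro borel_measurable_prod) measurable
  have D2: "(\<lambda>y. Delta1 m (\<lambda>k. cis (\<Psi> y k) / V y) (1/\<theta>)) \<in> borel_measurable M"
    unfolding Delta1_def
    by (intro borel_measurable_prod) measurable
  have D3: "(\<lambda>y. (\<Prod>j<n. \<Prod>k<m. (1 - S y * cis (\<Phi> y j) / (cis (\<Psi> y k) / V y)) *
              (1 - cis (\<Psi> y k) / V y / (S y * cis (\<Phi> y j))))) \<in> borel_measurable M"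
    by (intro borel_measurable_prod) measurable
  have P: "(\<lambda>y. p (\<lambda>j. S y * cis (\<Phi> y j)) (\<lambda>k. cis (\<Psi> y k) / V y)) \<in> borel_measurable M"
    by (rule poly_meas[OF p]) measurable
  have Q: "(\<lambda>y. q (\<lambda>j. cis (\<Phi> y j) / cnj (S y)) (\<lambda>k. cnj (V y) * cis (\<Psi> y k))) \<in> borel_measurable M"
    by (rule poly_meas[OF q]) measurable
  have cQ: "(\<lambda>y. cnj (q (\<lambda>j. cis (\<Phi> y j) / cnj (S y)) (\<lambda>k. cnj (V y) * cis (\<Psi> y k)))) \<in> borel_measurable M"
    by (rule measurable_compose[OF Q borel_measurable_continuous_onI]) (intro continuous_intros)
  show ?thesis unfolding Hx_def Gf_def Delta2_def
    using D1 D2 D3 P cQ by measurable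
qed



lemma Delta1_unit_bound:
  assumes "0 \<le> \<theta>"
  shows "cmod (Delta1 n (\<lambda>j. cis (\<phi> j)) \<theta>) \<le> (\<Prod>k<n. \<Prod>j<k. 4 powr \<theta>)"
  unfolding Delta1_def prod_norm[symmetric]
proof (intro prod_mono conjI)
  fix k j
  have "cmod (1 - cis (\<phi> j) / cis (\<phi> k)) \<le> cmod 1 + cmod (cis (\<phi> j) / cis (\<phi> k))"
    by (rule norm_triangle_ineq4)
  hence c2: "cmod (1 - cis (\<phi> j) / cis (\<phi> k)) \<le> 2" by (simp add: norm_divide)
  have "(cmod (1 - cis (\<phi> j) / cis (\<phi> k)))\<^sup>2 \<le> 2\<^sup>2"
    by (rule power_mono[OF c2]) simp
  hence "(cmod (1 - cis (\<phi> j) / cis (\<phi> k)))\<^sup>2 powr \<theta> \<le> 4 powr \<theta>"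
    using assms by (intro powr_mono2) auto
  thus "cmod (complex_of_real ((cmod (1 - cis (\<phi> j) / cis (\<phi> k)))\<^sup>2 powr \<theta>)) \<le> 4 powr \<theta>"
    by simp
qed (auto intro!: prod_nonneg)

lemma dfac_pos: "0 < t \<Longrightarrow> 0 < r \<Longrightarrow> t * r < 1 \<Longrightarrow> 0 < (1 - t * r) * (1 / (t * r) - (1::real))"
  by (intro mult_pos_pos) (auto simp: field_simps)

lemma den_lower:
  assumes "cmod s = t" "cmod v = r" "0 < t" "0 < r" "t * r < 1"
  shows "(\<Prod>j<n. \<Prod>k<m. (1 - t * r) * (1 / (t * r) - 1)) \<le> cmod (den n m s v \<phi> \<psi>)"
  unfolding den_def prod_norm[symmetric]
proof (intro prod_mono conjI)
  fix j k
  have a1: "cmod (s * cis (\<phi> j) / (cis (\<psi> k) / v)) = t * r" using assms by (simp add: norm_mult norm_divide)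
  have a2: "cmod (cis (\<psi> k) / v / (s * cis (\<phi> j))) = 1 / (t * r)" using assms by (simp add: norm_mult norm_divide)
  have "norm (1::complex) - cmod (s * cis (\<phi> j) / (cis (\<psi> k) / v)) \<le> cmod (1 - s * cis (\<phi> j) / (cis (\<psi> k) / v))"
    by (rule norm_triangle_ineq2)
  hence b1: "1 - t * r \<le> cmod (1 - s * cis (\<phi> j) / (cis (\<psi> k) / v))" using a1 by simp
  have "cmod (cis (\<psi> k) / v / (s * cis (\<phi> j))) - norm (1::complex) \<le> cmod (cis (\<psi> k) / v / (s * cis (\<phi> j)) - 1)"
    by (rule norm_triangle_ineq2)
  hence b2: "1 / (t * r) - 1 \<le> cmod (1 - cis (\<psi> k) / v / (s * cis (\<phi> j)))" using a2 by (simp add: norm_minus_commute)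
  have "0 \<le> 1 - t * r" "0 \<le> 1 / (t * r) - 1" using assms by (auto simp: field_simps)
  thus "0 \<le> (1 - t * r) * (1 / (t * r) - 1)" by simp
  show "(1 - t * r) * (1 / (t * r) - 1) \<le> cmod ((1 - s * cis (\<phi> j) / (cis (\<psi> k) / v)) * (1 - cis (\<psi> k) / v / (s * cis (\<phi> j))))"
    unfolding norm_mult using b1 b2 \<open>0 \<le> 1 - t * r\<close> \<open>0 \<le> 1 / (t * r) - 1\<close> by (intro mult_mono) auto
qed (use dfac_pos[OF assms(3,4,5)] in \<open>auto intro!: prod_nonneg\<close>)

lemma Hx_bound:
  assumes p: "poly_fun n m p" and q: "poly_fun n m q" and th: "0 < \<theta>"
    and t: "0 < t" and r: "0 < r" and tr: "t * r < 1"
  obtains B where "\<And>s v \<phi> \<psi>. cmod s = t \<Longrightarrow> cmod v = r \<Longrightarrow> cmod (Hx n m \<theta> p q s v \<phi> \<psi>) \<le> B"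
proof -
  obtain BP where BP: "\<And>z w. (\<And>j. j < n \<Longrightarrow> cmod (z j) \<le> t) \<Longrightarrow> (\<And>k. k < m \<Longrightarrow> cmod (w k) \<le> 1/r)
      \<Longrightarrow> cmod (p z w) \<le> BP"
    using poly_bound[OF p, of t "1/r"] t r by auto
  obtain BQ where BQ: "\<And>z w. (\<And>j. j < n \<Longrightarrow> cmod (z j) \<le> 1/t) \<Longrightarrow> (\<And>k. k < m \<Longrightarrow> cmod (w k) \<le> r)
      \<Longrightarrow> cmod (q z w) \<le> BQ"
    using poly_bound[OF q, of "1/t" r] t r by auto
  have "cmod (p (\<lambda>_. 0) (\<lambda>_. 0)) \<le> BP" by (rule BP) (use t r in auto)
  hence BP0: "0 \<le> BP" by (meson norm_ge_zero order_trans)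
  have "cmod (q (\<lambda>_. 0) (\<lambda>_. 0)) \<le> BQ" by (rule BQ) (use t r in auto)
  hence BQ0: "0 \<le> BQ" by (meson norm_ge_zero order_trans)
  define C1 where "C1 = (\<Prod>k<n. \<Prod>j<k. 4 powr \<theta>)"
  define C2 where "C2 = (\<Prod>k<m. \<Prod>j<k. 4 powr (1/\<theta>))"
  define DD where "DD = (\<Prod>j<n. \<Prod>k<m. (1 - t * r) * (1 / (t * r) - 1))"
  have DD0: "0 < DD" unfolding DD_def using dfac_pos[OF t r tr] by (intro prod_pos) auto
  have "cmod (Hx n m \<theta> p q s v \<phi> \<psi>) \<le> C1 * C2 / DD * BP * BQ" if s: "cmod s = t" and v: "cmod v = r" for s v \<phi> \<psi>
  proof -
    have sv: "s \<noteq> 0" "v \<noteq> 0" using s v t r by auto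
    have h1: "cmod (Delta1 n (\<lambda>j. cis (\<phi> j)) \<theta>) \<le> C1" unfolding C1_def using th by (intro Delta1_unit_bound) auto
    have h2: "cmod (Delta1 m (\<lambda>k. cis (\<psi> k)) (1/\<theta>)) \<le> C2" unfolding C2_def using th by (intro Delta1_unit_bound) auto
    have h3: "DD \<le> cmod (den n m s v \<phi> \<psi>)" unfolding DD_def by (rule den_lower[OF s v t r tr])
    have h4: "cmod (p (\<lambda>j. s * cis (\<phi> j)) (\<lambda>k. cis (\<psi> k) / v)) \<le> BP"
      using s v r by (intro BP) (auto simp: norm_mult norm_divide)
    have h5: "cmod (cnj (q (\<lambda>j. cis (\<phi> j) / cnj s) (\<lambda>k. cnj v * cis (\<psi> k)))) \<le> BQ"
      using s v t by (simp only: complex_mod_cnj, intro BQ) (auto simp: norm_mult norm_divide)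
    have h12: "cmod (Delta1 n (\<lambda>j. cis (\<phi> j)) \<theta> * Delta1 m (\<lambda>k. cis (\<psi> k)) (1/\<theta>)) \<le> C1 * C2"
      unfolding norm_mult using h1 h2 by (intro mult_mono) (auto intro: order_trans[OF norm_ge_zero])
    have h123: "cmod (Delta1 n (\<lambda>j. cis (\<phi> j)) \<theta> * Delta1 m (\<lambda>k. cis (\<psi> k)) (1/\<theta>) / den n m s v \<phi> \<psi>) \<le> C1 * C2 / DD"
      unfolding norm_divide using h12 h3 DD0 by (intro frac_le) (auto intro: order_trans[OF norm_ge_zero])
    have "C1 * C2 / DD \<ge> 0" using h123 by (meson norm_ge_zero order_trans)
    show ?thesis unfolding Hx_alt[OF sv] norm_mult
      using h123 h4 h5 BP0 BQ0 \<open>C1 * C2 / DD \<ge> 0\<close>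
      by (intro mult_mono) (auto simp del: times_divide_eq_left intro: mult_nonneg_nonneg)
  qed
  thus ?thesis using that by blast
qed



abbreviation XX :: "nat \<Rightarrow> nat \<Rightarrow> ((nat \<Rightarrow> real) \<times> (nat \<Rightarrow> real)) measure" where
  "XX n m \<equiv> angles n \<Otimes>\<^sub>M angles m"

lemma finite_measure_angles: "finite_measure (angles n)"
proof (rule finite_measureI)
  have "emeasure (angles n) (space (angles n)) = (\<Prod>i<n. emeasure LL (space LL))"
    unfolding angles_def space_PiM by (intro LLprod.emeasure_PiM) auto
  also have "\<dots> < \<infinity>" using finite_measure.emeasure_finite[OF finite_measure_LL]
    by (simp add: power_less_top_ennreal top.not_eq_extremum)
  finally show "emeasure (angles n) (space (angles n)) \<noteq> \<infinity>" by simp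
qed

lemma finite_measure_XX: "finite_measure (XX n m)"
  by (intro finite_measure_pair_measure finite_measure_angles)

lemma sigma_finite_angles: "sigma_finite_measure (angles n)"
  using finite_measure_angles finite_measure_def by blast

lemma comp_meas: "j < n \<Longrightarrow> (\<lambda>\<phi>. \<phi> j) \<in> borel_measurable (angles n)"
  unfolding angles_def
  by (rule measurable_compose[OF measurable_component_singleton[of j "{..<n}" "\<lambda>_. LL"]
        continuous_imp_measurable_on_sets_lebesgue]) (auto intro: continuous_intros)

lemma id_LL_meas: "(\<lambda>x. x) \<in> borel_measurable LL"
  by (rule continuous_imp_measurable_on_sets_lebesgue) (auto intro: continuous_intros)



lemma fst_comp_meas: "j < n \<Longrightarrow> (\<lambda>x. fst x j) \<in> borel_measurable (XX n m)"
  by (rule measurable_compose[OF measurable_fst comp_meas])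

lemma snd_comp_meas: "k < m \<Longrightarrow> (\<lambda>x. snd x k) \<in> borel_measurable (XX n m)"
  by (rule measurable_compose[OF measurable_snd comp_meas])

lemma Hx_meas_XX:
  assumes "poly_fun n m p" "poly_fun n m q"
  shows "(\<lambda>x. Hx n m \<theta> p q s v (fst x) (snd x)) \<in> borel_measurable (XX n m)"
  by (rule Hx_meas[OF assms]) (auto intro: fst_comp_meas snd_comp_meas)

lemma cont_LL_meas: "continuous_on UNIV f \<Longrightarrow> (\<lambda>y. f (fst y)) \<in> borel_measurable (LL \<Otimes>\<^sub>M N)"
  by (rule measurable_compose[OF measurable_fst continuous_imp_measurable_on_sets_lebesgue])
     (auto intro: continuous_on_subset)

lemma Hx_meas_L:
  assumes "poly_fun n m p" "poly_fun n m q" "continuous_on UNIV f1" "continuous_on UNIV f2"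
  shows "(\<lambda>y. Hx n m \<theta> p q (f1 (fst y)) (f2 (fst y)) (fst (snd y)) (snd (snd y))) \<in> borel_measurable (LL \<Otimes>\<^sub>M XX n m)"
proof (rule Hx_meas[OF assms(1,2)])
  show "(\<lambda>y. f1 (fst y)) \<in> borel_measurable (LL \<Otimes>\<^sub>M XX n m)" by (rule cont_LL_meas[OF assms(3)])
  show "(\<lambda>y. f2 (fst y)) \<in> borel_measurable (LL \<Otimes>\<^sub>M XX n m)" by (rule cont_LL_meas[OF assms(4)])
  show "(\<lambda>y. fst (snd y) j) \<in> borel_measurable (LL \<Otimes>\<^sub>M XX n m)" if "j < n" for j
    by (rule measurable_compose[OF measurable_snd fst_comp_meas[OF that]])
  show "(\<lambda>y. snd (snd y) k) \<in> borel_measurable (LL \<Otimes>\<^sub>M XX n m)" if "k < m" for k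
    by (rule measurable_compose[OF measurable_snd snd_comp_meas[OF that]])
qed

lemma integrable_Hx_XX:
  assumes p: "poly_fun n m p" and q: "poly_fun n m q" and th: "0 < \<theta>"
    and "0 < t" "0 < r" "t * r < 1" "cmod s = t" "cmod v = r"
  shows "integrable (XX n m) (\<lambda>x. Hx n m \<theta> p q s v (fst x) (snd x))"
proof -
  obtain B where B: "\<And>s v \<phi> \<psi>. cmod s = t \<Longrightarrow> cmod v = r \<Longrightarrow> cmod (Hx n m \<theta> p q s v \<phi> \<psi>) \<le> B"
    using Hx_bound[OF p q th assms(4,5,6)] by blast
  show ?thesis
    by (rule finite_measure.integrable_const_bound[OF finite_measure_XX, where B=B])
       (use B assms(7,8) Hx_meas_XX[OF p q] in auto)
qed

lemma integrable_Hx_L: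
  assumes p: "poly_fun n m p" and q: "poly_fun n m q" and th: "0 < \<theta>"
    and "0 < t" "0 < r" "t * r < 1"
    and f: "continuous_on UNIV f1" "continuous_on UNIV f2"
    and n: "\<And>a. cmod (f1 a) = t" "\<And>a. cmod (f2 a) = r"
  shows "integrable (LL \<Otimes>\<^sub>M XX n m) (\<lambda>(a, x). Hx n m \<theta> p q (f1 a) (f2 a) (fst x) (snd x))"
proof -
  obtain B where B: "\<And>s v \<phi> \<psi>. cmod s = t \<Longrightarrow> cmod v = r \<Longrightarrow> cmod (Hx n m \<theta> p q s v \<phi> \<psi>) \<le> B"
    using Hx_bound[OF p q th assms(4,5,6)] by blast
  have fm: "finite_measure (LL \<Otimes>\<^sub>M XX n m)"
    by (intro finite_measure_pair_measure finite_measure_XX finite_measure_LL)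
  have meas: "(\<lambda>(a, x). Hx n m \<theta> p q (f1 a) (f2 a) (fst x) (snd x)) \<in> borel_measurable (LL \<Otimes>\<^sub>M XX n m)"
    using Hx_meas_L[OF p q f, of \<theta>] by (simp add: case_prod_beta)
  show ?thesis
    by (rule finite_measure.integrable_const_bound[OF fm, where B=B])
       (use B n meas in auto)
qed

lemma distr_T1: "distr (XX n m) (XX n m) (\<lambda>(\<phi>, \<psi>). (shiftv n a \<phi>, \<psi>)) = XX n m"
proof -
  have "distr (angles n) (angles n) (shiftv n a) \<Otimes>\<^sub>M distr (angles m) (angles m) (\<lambda>x. x) =
        distr (XX n m) (XX n m) (\<lambda>(x, y). (shiftv n a x, y))"
    by (rule pair_measure_distr[OF shiftv_measurable measurable_ident_sets[OF refl]])
       (simp add: sigma_finite_angles)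
  thus ?thesis by (simp add: shiftv_distr)
qed

lemma distr_T2: "distr (XX n m) (XX n m) (\<lambda>(\<phi>, \<psi>). (\<phi>, shiftv m a \<psi>)) = XX n m"
proof -
  have "distr (angles n) (angles n) (\<lambda>x. x) \<Otimes>\<^sub>M distr (angles m) (angles m) (shiftv m a) =
        distr (XX n m) (XX n m) (\<lambda>(x, y). (x, shiftv m a y))"
    by (rule pair_measure_distr[OF measurable_ident_sets[OF refl] shiftv_measurable])
       (simp add: shiftv_distr sigma_finite_angles)
  thus ?thesis by (simp add: shiftv_distr)
qed



lemma measurable_T1: "(\<lambda>(\<phi>, \<psi>). (shiftv n a \<phi>, \<psi>)) \<in> measurable (XX n m) (XX n m)"
  unfolding split_beta' by (rule measurable_Pair[OF measurable_compose[OF measurable_fst shiftv_measurable] measurable_snd])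

lemma measurable_T2: "(\<lambda>(\<phi>, \<psi>). (\<phi>, shiftv m a \<psi>)) \<in> measurable (XX n m) (XX n m)"
  unfolding split_beta' by (rule measurable_Pair[OF measurable_fst measurable_compose[OF measurable_snd shiftv_measurable]])

lemma slotA:
  assumes p: "poly_fun n m p" and q: "poly_fun n m q" and th: "0 < \<theta>"
    and v: "0 < v" and t: "0 < t1" "t1 < 1/v" "0 < t2" "t2 < 1/v"
  shows "integral\<^sup>L (XX n m) (\<lambda>x. Hx n m \<theta> p q (complex_of_real t1) (complex_of_real v) (fst x) (snd x))
       = integral\<^sup>L (XX n m) (\<lambda>x. Hx n m \<theta> p q (complex_of_real t2) (complex_of_real v) (fst x) (snd x))"
proof -
  define F where "F s x = Hx n m \<theta> p q s (complex_of_real v) (fst x) (snd x)" for s x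
  have "integral\<^sup>L (XX n m) (F t1) = integral\<^sup>L (XX n m) (F t2)"
  proof (rule avg_indep[where R="1/v"])
    show "finite_measure (XX n m)" by (rule finite_measure_XX)
    show "(\<lambda>s. F s x) holomorphic_on ball 0 (1 / v) - {0}" for x
      using Hx_hol1[OF p q, of "complex_of_real v" \<theta> "fst x" "snd x"] v unfolding F_def by simp
    show "integral\<^sup>L (XX n m) (F (complex_of_real t * cis a)) = integral\<^sup>L (XX n m) (F (complex_of_real t))"
      if "0 < t" "t < 1 / v" for t a
    proof -
      let ?T = "\<lambda>(\<phi>, \<psi>). (shiftv n a \<phi>, \<psi>)"
      have "F (complex_of_real t * cis a) = (\<lambda>x. F (complex_of_real t) (?T x))"
        apply (rule ext) subgoal for x
        unfolding F_def Hx_rot1 by (cases x) (auto intro!: Hx_cong[OF p q] simp: shiftv_def cis_per) done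
      hence "integral\<^sup>L (XX n m) (F (complex_of_real t * cis a)) = integral\<^sup>L (XX n m) (\<lambda>x. F (complex_of_real t) (?T x))"
        by (simp only:)
      also have "\<dots> = integral\<^sup>L (distr (XX n m) (XX n m) ?T) (F (complex_of_real t))"
        by (rule integral_distr[symmetric, OF measurable_T1]) (unfold F_def, rule Hx_meas_XX[OF p q])
      also have "\<dots> = integral\<^sup>L (XX n m) (F (complex_of_real t))" by (simp only: distr_T1)
      finally show ?thesis .
    qed
    show "integrable (LL \<Otimes>\<^sub>M XX n m) (\<lambda>(a, x). F (complex_of_real t * cis a) x)"
      if "0 < t" "t < 1 / v" for t
    proof -
      have c: "continuous_on UNIV (\<lambda>a. complex_of_real t * cis a)" by (intro continuous_intros)
      show ?thesis unfolding F_def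
        by (rule integrable_Hx_L[OF p q th _ _ _ c continuous_on_const, where t=t and r=v])
           (use that v in \<open>auto simp: norm_mult field_simps\<close>)
    qed
  qed (use t in auto)
  thus ?thesis unfolding F_def .
qed

lemma slotB:
  assumes p: "poly_fun n m p" and q: "poly_fun n m q" and th: "0 < \<theta>"
    and t: "0 < t" and v: "0 < v1" "v1 < 1/t" "0 < v2" "v2 < 1/t"
  shows "integral\<^sup>L (XX n m) (\<lambda>x. Hx n m \<theta> p q (complex_of_real t) (complex_of_real v1) (fst x) (snd x))
       = integral\<^sup>L (XX n m) (\<lambda>x. Hx n m \<theta> p q (complex_of_real t) (complex_of_real v2) (fst x) (snd x))"
proof -
  define F where "F v x = Hx n m \<theta> p q (complex_of_real t) v (fst x) (snd x)" for v x
  have "integral\<^sup>L (XX n m) (F v1) = integral\<^sup>L (XX n m) (F v2)"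
  proof (rule avg_indep[where R="1/t"])
    show "finite_measure (XX n m)" by (rule finite_measure_XX)
    show "(\<lambda>s. F s x) holomorphic_on ball 0 (1 / t) - {0}" for x
      using Hx_hol2[OF p q, of "complex_of_real t" \<theta> "fst x" "snd x"] t unfolding F_def by simp
    show "integral\<^sup>L (XX n m) (F (complex_of_real r * cis a)) = integral\<^sup>L (XX n m) (F (complex_of_real r))"
      if "0 < r" "r < 1 / t" for r a
    proof -
      let ?T = "\<lambda>(\<phi>, \<psi>). (\<phi>, shiftv m (-a) \<psi>)"
      have "F (complex_of_real r * cis a) = (\<lambda>x. F (complex_of_real r) (?T x))"
        apply (rule ext) subgoal for x
        unfolding F_def Hx_rot2 by (cases x) (auto intro!: Hx_cong[OF p q] simp: shiftv_def cis_per) done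
      hence "integral\<^sup>L (XX n m) (F (complex_of_real r * cis a)) = integral\<^sup>L (XX n m) (\<lambda>x. F (complex_of_real r) (?T x))"
        by (simp only:)
      also have "\<dots> = integral\<^sup>L (distr (XX n m) (XX n m) ?T) (F (complex_of_real r))"
        by (rule integral_distr[symmetric, OF measurable_T2]) (unfold F_def, rule Hx_meas_XX[OF p q])
      also have "\<dots> = integral\<^sup>L (XX n m) (F (complex_of_real r))" by (simp only: distr_T2)
      finally show ?thesis .
    qed
    show "integrable (LL \<Otimes>\<^sub>M XX n m) (\<lambda>(a, x). F (complex_of_real r * cis a) x)"
      if "0 < r" "r < 1 / t" for r
    proof -
      have c: "continuous_on UNIV (\<lambda>a. complex_of_real r * cis a)" by (intro continuous_intros)
      show ?thesis unfolding F_def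
        by (rule integrable_Hx_L[OF p q th _ _ _ continuous_on_const c, where t=t and r=r])
           (use that t in \<open>auto simp: norm_mult field_simps\<close>)
    qed
  qed (use v in auto)
  thus ?thesis unfolding F_def .
qed



lemma pairing_eq:
  assumes p: "poly_fun n m p" and q: "poly_fun n m q" and th: "0 < \<theta>"
    and x: "0 < \<xi>" "\<xi> < \<xi>'"
  shows "pairing' n m \<theta> \<xi> \<xi>' p q = complex_of_real (1 / (fact n * fact m) * (1 / (2 * pi)) ^ (n + m)) *
     integral\<^sup>L (XX n m) (\<lambda>x. Hx n m \<theta> p q (complex_of_real \<xi>) (complex_of_real (1/\<xi>')) (fst x) (snd x))"
proof -
  interpret pair_sigma_finite "angles n" "angles m"
    unfolding pair_sigma_finite_def using sigma_finite_angles by blast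
  have x': "0 < \<xi>'" using x by simp
  have int: "integrable (XX n m) (\<lambda>x. Hx n m \<theta> p q (complex_of_real \<xi>) (complex_of_real (1/\<xi>')) (fst x) (snd x))"
    by (rule integrable_Hx_XX[OF p q th, where t=\<xi> and r="1/\<xi>'"]) (use x in \<open>auto simp: field_simps norm_divide\<close>)
  have "(\<integral>\<phi>. (\<integral>\<psi>. Delta2 n m (torus_pt \<xi> \<phi>) (torus_pt \<xi>' \<psi>) \<theta>
                  * p (torus_pt \<xi> \<phi>) (torus_pt \<xi>' \<psi>)
                  * conj_fun q (torus_pt \<xi> \<phi>) (torus_pt \<xi>' \<psi>) \<partial>angles m) \<partial>angles n)
      = (\<integral>\<phi>. (\<integral>\<psi>. Hx n m \<theta> p q (complex_of_real \<xi>) (complex_of_real (1/\<xi>')) \<phi> \<psi> \<partial>angles m) \<partial>angles n)"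
    by (simp only: Hx_torus[OF x(1) x'])
  also have "\<dots> = integral\<^sup>L (XX n m) (\<lambda>x. Hx n m \<theta> p q (complex_of_real \<xi>) (complex_of_real (1/\<xi>')) (fst x) (snd x))"
    using integral_fst'[OF int] by simp
  finally show ?thesis unfolding pairing'_def by simp
qed

theorem lemma3p2:
  fixes n m :: nat and \<theta> :: real and p q :: "cpt \<Rightarrow> cpt \<Rightarrow> complex"
  assumes "n \<ge> 1" and "m \<ge> 1" and "\<theta> > 0"
    and "p \<in> Lambda n m \<theta>" and "q \<in> Lambda n m \<theta>"
    and "0 < \<xi>1" and "\<xi>1 < \<xi>1'" and "0 < \<xi>2" and "\<xi>2 < \<xi>2'"
  shows "pairing' n m \<theta> \<xi>1 \<xi>1' p q = pairing' n m \<theta> \<xi>2 \<xi>2' p q"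
proof -
  have p: "poly_fun n m p" and q: "poly_fun n m q" using assms(4,5) unfolding Lambda_def by auto
  have th: "0 < \<theta>" by fact
  define J where "J t r = integral\<^sup>L (XX n m) (\<lambda>x. Hx n m \<theta> p q (complex_of_real t) (complex_of_real r) (fst x) (snd x))" for t r
  define a0 where "a0 = min \<xi>1 \<xi>2"
  define b0 where "b0 = max \<xi>1' \<xi>2'"
  have a0: "0 < a0" "a0 \<le> \<xi>1" "a0 \<le> \<xi>2" using assms unfolding a0_def by auto
  have b0: "\<xi>1' \<le> b0" "\<xi>2' \<le> b0" unfolding b0_def by auto
  have e1: "J \<xi>1 (1/\<xi>1') = J a0 (1/\<xi>1')" unfolding J_def
    by (rule slotA[OF p q th]) (use assms a0 in auto)
  have e2: "J a0 (1/\<xi>1') = J a0 (1/b0)" unfolding J_def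
    by (rule slotB[OF p q th]) (use assms a0 b0 in \<open>auto simp: field_simps\<close>)
  have e3: "J a0 (1/\<xi>2') = J a0 (1/b0)" unfolding J_def
    by (rule slotB[OF p q th]) (use assms a0 b0 in \<open>auto simp: field_simps\<close>)
  have e4: "J \<xi>2 (1/\<xi>2') = J a0 (1/\<xi>2')" unfolding J_def
    by (rule slotA[OF p q th]) (use assms a0 in auto)
  show ?thesis
    unfolding pairing_eq[OF p q th assms(6,7)] pairing_eq[OF p q th assms(8,9)]
    using e1 e2 e3 e4 unfolding J_def by simp
qed

end
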